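(* Let $G$ be a gap-free finite simple graph, $s\geq1$, and $e_1,\dots,e_s$ edges of $G$ (repetitions allowed), and let $G'$ be the graph associated to $(I(G)^{s+1}:e_1\cdots e_s)^{\mathrm{pol}}$. If $w_1,\dots,w_n$ with $n\geq5$ is an anticycle in $G'$, then $w_1,\dots,w_n$ are vertices of $G$ and form an anticycle in $G$.
   Context: $S=K[x_1,\dots,x_n]$ with the $x_i$ the vertices of $G$; $I(G)=(xy: xy\text{ an edge})$; edges identified with monomials; $(J:m)=\{f: fm\in J\}$; $J=(I(G)^{s+1}:e_1\cdots e_s)$ is generated by quadratic monomials. $J^{\mathrm{pol}}\subseteq K[x_1,\dots,x_n,x_1',\dots,x_n']$ is generated by all $x_ix_j$ ($i\ne j$) with $x_ix_j\in J$ and all $x_kx_k'$ with $x_k^2\in J$. The associated graph $G'$ has vertex set $V(G)\cup\{x_k' : x_k^2\in J\}$ and edges $\{x_ix_j: i\ne j, x_ix_j\in J\}\cup\{x_kx_k' : x_k^2\in J\}$. Distinct vertices $w_1,\dots,w_n$ form an anticycle in a graph $H$ if the induced subgraph of $H$ on them has complement equal to the cycle $w_1w_2\cdots w_nw_1$, i.e. $w_iw_j$ is an edge of $H$ iff $j\not\equiv i\pm1 \pmod n$. Gap-free: no two vertex-disjoint edges $uv$, $xy$ with no edge between $\{u,v\}$ and $\{x,y\}$. *)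

theory Defs
  imports Main "HOL-Library.Multiset"
begin

text \<open>Simple graphs: finite vertex set V with a symmetric irreflexive edge relation E on V.
Monomials in the variables (vertices) are represented as multisets of vertices.\<close>

definition simple_graph :: "'a set \<Rightarrow> ('a \<Rightarrow> 'a \<Rightarrow> bool) \<Rightarrow> bool" where
  "simple_graph V E \<longleftrightarrow> finite V \<and> (\<forall>u v. E u v \<longrightarrow> u \<in> V \<and> v \<in> V \<and> u \<noteq> v \<and> E v u)"

definition gap_free :: "('a \<Rightarrow> 'a \<Rightarrow> bool) \<Rightarrow> bool" where
  "gap_free E \<longleftrightarrow> \<not> (\<exists>u v x y. E u v \<and> E x y \<and> u \<noteq> x \<and> u \<noteq> y \<and> v \<noteq> x \<and> v \<noteq> y \<and>
       \<not> E u x \<and> \<not> E u y \<and> \<not> E v x \<and> \<not> E v y)"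

definition edge_mon :: "'a \<times> 'a \<Rightarrow> 'a multiset" where
  "edge_mon e = {#fst e, snd e#}"

text \<open>A monomial m lies in the monomial ideal I(G)^k iff it is divisible by a product of k edges.\<close>
definition in_edge_power :: "('a \<Rightarrow> 'a \<Rightarrow> bool) \<Rightarrow> nat \<Rightarrow> 'a multiset \<Rightarrow> bool" where
  "in_edge_power E k m \<longleftrightarrow>
     (\<exists>fs. length fs = k \<and> (\<forall>f\<in>set fs. E (fst f) (snd f)) \<and> sum_list (map edge_mon fs) \<subseteq># m)"

text \<open>Monomial m lies in J = (I(G)^(s+1) : e_1 ... e_s), where es = [e_1,...,e_s].\<close>
definition in_colon :: "('a \<Rightarrow> 'a \<Rightarrow> bool) \<Rightarrow> ('a \<times> 'a) list \<Rightarrow> 'a multiset \<Rightarrow> bool" where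
  "in_colon E es m \<longleftrightarrow> in_edge_power E (length es + 1) (m + sum_list (map edge_mon es))"

text \<open>The graph G' associated to J^pol; original vertices x are Inl x, new vertices x' are Inr x.\<close>
definition pol_vertices :: "'a set \<Rightarrow> ('a \<Rightarrow> 'a \<Rightarrow> bool) \<Rightarrow> ('a \<times> 'a) list \<Rightarrow> ('a + 'a) set" where
  "pol_vertices V E es = Inl ` V \<union> Inr ` {k \<in> V. in_colon E es {#k, k#}}"

fun pol_edge :: "('a \<Rightarrow> 'a \<Rightarrow> bool) \<Rightarrow> ('a \<times> 'a) list \<Rightarrow> ('a + 'a) \<Rightarrow> ('a + 'a) \<Rightarrow> bool" where
  "pol_edge E es (Inl i) (Inl j) = (i \<noteq> j \<and> in_colon E es {#i, j#})"
| "pol_edge E es (Inl k) (Inr k') = (k = k' \<and> in_colon E es {#k, k#})"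
| "pol_edge E es (Inr k') (Inl k) = (k = k' \<and> in_colon E es {#k, k#})"
| "pol_edge E es (Inr _) (Inr _) = False"

definition anticycle :: "'b set \<Rightarrow> ('b \<Rightarrow> 'b \<Rightarrow> bool) \<Rightarrow> 'b list \<Rightarrow> bool" where
  "anticycle W H ws \<longleftrightarrow> distinct ws \<and> set ws \<subseteq> W \<and>
     (\<forall>i < length ws. \<forall>j < length ws. i \<noteq> j \<longrightarrow>
        (H (ws ! i) (ws ! j) \<longleftrightarrow> \<not> (j = Suc i mod length ws \<or> i = Suc j mod length ws)))"

end

theory Submission
  imports Defs
begin

definition dec :: "('a \<Rightarrow> 'a \<Rightarrow> bool) \<Rightarrow> 'a multiset \<Rightarrow> bool" where
  "dec E m \<longleftrightarrow> (\<exists>fs. (\<forall>f\<in>set fs. E (fst f) (snd f)) \<and> sum_list (map edge_mon fs) = m)"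

definition MS :: "('a \<times> 'a) list \<Rightarrow> 'a multiset" where
  "MS L = sum_list (map edge_mon L)"

definition RR :: "('a \<Rightarrow> 'a \<Rightarrow> bool) \<Rightarrow> ('a \<times> 'a) list \<Rightarrow> 'a \<Rightarrow> 'a \<Rightarrow> bool" where
  "RR E L x y \<longleftrightarrow> dec E ({#x, y#} + MS L)"

lemma dec_empty: "dec E {#}"
  unfolding dec_def by (rule exI[of _ "[]"]) simp

lemma dec_add: "dec E m1 \<Longrightarrow> dec E m2 \<Longrightarrow> dec E (m1 + m2)"
  unfolding dec_def
  by (metis (no_types, lifting) Un_iff map_append set_append sum_list_append)

lemma dec_edge: "E x y \<Longrightarrow> dec E {#x, y#}"
  unfolding dec_def by (rule exI[of _ "[(x,y)]"]) (simp add: edge_mon_def)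

lemma dec_MS: "\<forall>f\<in>set L. E (fst f) (snd f) \<Longrightarrow> dec E (MS L)"
  unfolding dec_def MS_def by blast

lemma MS_remove1: "e \<in> set L \<Longrightarrow> MS L = edge_mon e + MS (remove1 e L)"
  unfolding MS_def by (rule sum_list_map_remove1)

lemma MS_Cons: "MS (e # L) = edge_mon e + MS L"
  unfolding MS_def by simp

lemma in_MS: "p \<in># MS L \<Longrightarrow> \<exists>e\<in>set L. p \<in># edge_mon e"
  unfolding MS_def by (induction L) auto

lemma edge_mon_cases: "p \<in># edge_mon e \<Longrightarrow> \<exists>q. edge_mon e = {#p, q#}"
  unfolding edge_mon_def by (auto simp: add_mset_commute)

lemma pair_eq: "{#a, b#} = {#c, d#} \<Longrightarrow> (a = c \<and> b = d) \<or> (a = d \<and> b = c)"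
  by (auto simp: add_eq_conv_ex)

lemma dec_pick:
  assumes symE: "\<And>u v. E u v \<Longrightarrow> E v u"
    and "dec E m" and "x \<in># m"
  shows "\<exists>p r. E x p \<and> dec E r \<and> m = {#x, p#} + r"
proof -
  obtain fs where fs1: "\<forall>f\<in>set fs. E (fst f) (snd f)" and fs2: "sum_list (map edge_mon fs) = m"
    using assms(2) unfolding dec_def by blast
  have "x \<in># MS fs" using assms(3) fs2 by (simp add: MS_def)
  from in_MS[OF this] obtain f where f1: "f \<in> set fs" and f2: "x \<in># edge_mon f"
    by blast
  from edge_mon_cases[OF f2] obtain p where p: "edge_mon f = {#x, p#}"
    by blast
  have Ef: "E (fst f) (snd f)" using fs1 f1 by blast
  have "{#fst f, snd f#} = {#x, p#}" using p by (simp add: edge_mon_def)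
  then have "(fst f = x \<and> snd f = p) \<or> (fst f = p \<and> snd f = x)"
    by (rule pair_eq)
  then have Exp: "E x p" using Ef symE by blast
  have m: "m = {#x, p#} + sum_list (map edge_mon (remove1 f fs))"
    using sum_list_map_remove1[OF f1, of edge_mon] fs2 p by simp
  have "\<forall>g\<in>set (remove1 f fs). E (fst g) (snd g)"
    using fs1 set_remove1_subset[of f fs] by blast
  then have "dec E (sum_list (map edge_mon (remove1 f fs)))"
    unfolding dec_def by blast
  then show ?thesis using m Exp by blast
qed

lemma dec_edge_mon: "E (fst e) (snd e) \<Longrightarrow> dec E (edge_mon e)"
  unfolding dec_def by (rule exI[of _ "[e]"]) simp

lemma edges_remove1: "\<forall>f\<in>set L. E (fst f) (snd f) \<Longrightarrow> \<forall>f\<in>set (remove1 g L). E (fst f) (snd f)"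
  using set_remove1_subset[of g L] by blast

lemma RR_sym: "RR E L x y = RR E L y x"
  unfolding RR_def by (simp add: add_mset_commute)

lemma RR_E: "E x y \<Longrightarrow> \<forall>f\<in>set L. E (fst f) (snd f) \<Longrightarrow> RR E L x y"
  unfolding RR_def by (intro dec_add dec_edge dec_MS)

lemma RR_up:
  assumes "g \<in> set L" "E (fst g) (snd g)" "RR E (remove1 g L) x y"
  shows "RR E L x y"
proof -
  have "dec E (({#x, y#} + MS (remove1 g L)) + edge_mon g)"
    using dec_add[OF assms(3)[unfolded RR_def] dec_edge_mon[of E g, OF assms(2)]] .
  moreover have "{#x, y#} + MS L = ({#x, y#} + MS (remove1 g L)) + edge_mon g"
    using MS_remove1[OF assms(1)] by (simp add: ac_simps)
  ultimately show ?thesis unfolding RR_def by simp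
qed

lemma RR_back:
  assumes "e \<in> set L" "edge_mon e = {#a, b#}" "E z a" "RR E (remove1 e L) b w"
  shows "RR E L z w"
proof -
  have "dec E ({#z, a#} + ({#b, w#} + MS (remove1 e L)))"
    using dec_add[OF dec_edge[of E z a, OF assms(3)] assms(4)[unfolded RR_def]] .
  moreover have "{#z, w#} + MS L = {#z, a#} + ({#b, w#} + MS (remove1 e L))"
    using MS_remove1[OF assms(1)] assms(2) by (simp add: ac_simps add_mset_commute)
  ultimately show ?thesis unfolding RR_def by metis
qed

lemma RR_step:
  assumes symE: "\<And>u v. E u v \<Longrightarrow> E v u"
    and R: "RR E L x y" and nE: "\<not> E x y"
  shows "\<exists>e a b. e \<in> set L \<and> edge_mon e = {#a, b#} \<and> E x a \<and> RR E (remove1 e L) b y"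
proof -
  have "x \<in># {#x, y#} + MS L" by simp
  from dec_pick[OF symE R[unfolded RR_def] this] obtain p r where
    pr: "E x p" "dec E r" "{#x, y#} + MS L = {#x, p#} + r" by blast
  then have eq: "add_mset y (MS L) = add_mset p r" by simp
  have "p \<noteq> y" using pr(1) nE by blast
  then have "p \<in># MS L" using eq by (metis insert_noteq_member)
  from in_MS[OF this] obtain e where e: "e \<in> set L" "p \<in># edge_mon e" by blast
  from edge_mon_cases[OF e(2)] obtain b where b: "edge_mon e = {#p, b#}" by blast
  have "add_mset y ({#p, b#} + MS (remove1 e L)) = add_mset p r"
    using eq MS_remove1[OF e(1)] b by simp
  then have "r = {#b, y#} + MS (remove1 e L)"
    by (simp add: add_mset_commute)
  then have RRb: "RR E (remove1 e L) b y" using pr(2) unfolding RR_def by simp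
  show ?thesis
    by (intro exI[of _ e] exI[of _ p] exI[of _ b] conjI e(1) b pr(1) RRb)
qed

lemma edge_E:
  assumes symE: "\<And>u v. E u v \<Longrightarrow> E v u"
    and "E (fst e) (snd e)" "edge_mon e = {#a, b#}"
  shows "E a b"
proof -
  have "{#fst e, snd e#} = {#a, b#}" using assms(3) by (simp add: edge_mon_def)
  then have "(fst e = a \<and> snd e = b) \<or> (fst e = b \<and> snd e = a)" by (rule pair_eq)
  then show ?thesis using assms(2) symE by blast
qed

lemma RR_split:
  assumes symE: "\<And>u v. E u v \<Longrightarrow> E v u"
  shows "\<forall>g\<in>set L. E (fst g) (snd g) \<Longrightarrow> RR E L u v \<Longrightarrow> f \<in> set L \<Longrightarrow> edge_mon f = {#p, q#} \<Longrightarrow>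
    RR E (remove1 f L) u v \<or>
    (\<exists>M1 M2. dec E M1 \<and> dec E M2 \<and> M1 + M2 = MS (remove1 f L) \<and>
       ((dec E ({#u, p#} + M1) \<and> dec E ({#q, v#} + M2)) \<or>
        (dec E ({#u, q#} + M1) \<and> dec E ({#p, v#} + M2))))"
proof (induction "length L" arbitrary: L u v f rule: less_induct)
  case less
  note edgesL = less.prems(1)
  show ?case
  proof (cases "E u v")
    case True
    show ?thesis using RR_E[OF True edges_remove1[OF edgesL, of f]] by (rule disjI1)
  next
    case False
    from RR_step[OF symE less.prems(2) False] obtain e a b where
      e: "e \<in> set L" "edge_mon e = {#a, b#}" "E u a" "RR E (remove1 e L) b v" by blast
    show ?thesis
    proof (cases "e = f")
      case True
      then have "{#a, b#} = {#p, q#}" using e(2) less.prems(4) by simp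
      then have ab: "(a = p \<and> b = q) \<or> (a = q \<and> b = p)" by (rule pair_eq)
      have d0: "dec E {#}" by (rule dec_empty)
      have d2: "dec E (MS (remove1 f L))" using dec_MS edges_remove1[OF edgesL] by blast
      have d3: "dec E ({#b, v#} + MS (remove1 f L))" using e(4) True unfolding RR_def by simp
      have d4: "dec E ({#u, a#} + {#})" using dec_edge[of E u a, OF e(3)] by simp
      show ?thesis
        apply (rule disjI2, rule exI[of _ "{#}"], rule exI[of _ "MS (remove1 f L)"])
        using ab d0 d2 d3 d4 by auto
    next
      case False
      have fin: "f \<in> set (remove1 e L)" using False less.prems(3) by (simp add: in_set_remove1)
      have ein: "e \<in> set (remove1 f L)" using False e(1) by (simp add: in_set_remove1)
      have len: "length (remove1 e L) < length L" using e(1) by (simp add: length_remove1)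
        (metis One_nat_def diff_less length_pos_if_in_set zero_less_one)
      have comm: "remove1 e (remove1 f L) = remove1 f (remove1 e L)" by (rule remove1_commute)
      have Ee: "E (fst e) (snd e)" using edgesL e(1) by blast
      from less.hyps[OF len edges_remove1[OF edgesL, of e] e(4) fin less.prems(4)]
      consider (A) "RR E (remove1 f (remove1 e L)) b v"
        | (B) M1 M2 where "dec E M1" "dec E M2" "M1 + M2 = MS (remove1 f (remove1 e L))"
          "(dec E ({#b, p#} + M1) \<and> dec E ({#q, v#} + M2)) \<or>
           (dec E ({#b, q#} + M1) \<and> dec E ({#p, v#} + M2))"
        by blast
      then show ?thesis
      proof cases
        case A
        then have "RR E (remove1 e (remove1 f L)) b v" using comm by simp
        then have "RR E (remove1 f L) u v" using RR_back[where E=E and z=u, OF ein e(2) e(3)] by blast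
        then show ?thesis by (rule disjI1)
      next
        case B
        have dM1: "dec E (edge_mon e + M1)" using dec_add[OF dec_edge_mon[of E e, OF Ee] B(1)] .
        have sumM: "(edge_mon e + M1) + M2 = MS (remove1 f L)"
          using B(3) MS_remove1[OF ein] comm by (simp add: ac_simps)
        have key: "dec E ({#b, r#} + M1) \<Longrightarrow> dec E ({#u, r#} + (edge_mon e + M1))" for r
        proof -
          assume h: "dec E ({#b, r#} + M1)"
          have "dec E ({#u, a#} + ({#b, r#} + M1))"
            using dec_add[OF dec_edge[of E u a, OF e(3)] h] .
          moreover have "{#u, a#} + ({#b, r#} + M1) = {#u, r#} + (edge_mon e + M1)"
            using e(2) by (simp add: add_mset_commute)
          ultimately show ?thesis by metis
        qed
        have "(dec E ({#u, p#} + (edge_mon e + M1)) \<and> dec E ({#q, v#} + M2)) \<or>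
           (dec E ({#u, q#} + (edge_mon e + M1)) \<and> dec E ({#p, v#} + M2))"
          using B(4) key by blast
        then show ?thesis using dM1 B(2) sumM
          by (intro disjI2 exI[of _ "edge_mon e + M1"] exI[of _ M2]) blast
      qed
    qed
  qed
qed

lemma keyZ:
  assumes symE: "\<And>u v. E u v \<Longrightarrow> E v u" and gap: "gap_free E"
  shows "\<forall>g\<in>set L. E (fst g) (snd g) \<Longrightarrow> e \<in> set L \<Longrightarrow> edge_mon e = {#a, b#} \<Longrightarrow>
    RR E (remove1 e L) b y \<Longrightarrow> \<not> RR E (remove1 e L) b z \<Longrightarrow> \<not> RR E L z y \<Longrightarrow>
    RR E L z w \<Longrightarrow> E w a \<or> RR E (remove1 e L) b w"
proof (induction "length L" arbitrary: L z w rule: less_induct)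
  case less
  note edgesL = less.prems(1) and eL = less.prems(2) and em = less.prems(3)
    and Rby = less.prems(4) and nbz = less.prems(5) and nzy = less.prems(6) and Rzw = less.prems(7)
  let ?L' = "remove1 e L"
  have edgesL': "\<forall>g\<in>set ?L'. E (fst g) (snd g)" by (rule edges_remove1[OF edgesL])
  have Ee: "E (fst e) (snd e)" using edgesL eL by blast
  have Eab: "E a b" by (rule edge_E[where E=E, OF symE Ee em])
  have nza: "\<not> E z a"
  proof
    assume "E z a"
    then have "RR E L z y" by (rule RR_back[where E=E and z=z, OF eL em _ Rby])
    then show False using nzy by blast
  qed
  have nzb: "\<not> E z b"
  proof
    assume "E z b"
    then have "E b z" using symE by blast
    then have "RR E ?L' b z" by (rule RR_E[OF _ edgesL'])
    then show False using nbz by blast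
  qed
  show ?case
  proof (cases "E z w")
    case True
    have za: "z \<noteq> a" using nzb Eab by blast
    have zb: "z \<noteq> b" using nza Eab symE by blast
    have wa: "w \<noteq> a" using True nza by blast
    have wb: "w \<noteq> b" using True nzb by blast
    have "E w a \<or> E w b"
    proof (rule ccontr)
      assume "\<not> (E w a \<or> E w b)"
      then have "E z w \<and> E a b \<and> z \<noteq> a \<and> z \<noteq> b \<and> w \<noteq> a \<and> w \<noteq> b \<and>
          \<not> E z a \<and> \<not> E z b \<and> \<not> E w a \<and> \<not> E w b"
        using True Eab za zb wa wb nza nzb by blast
      then show False using gap unfolding gap_free_def by blast
    qed
    then show ?thesis
    proof
      assume "E w a" then show ?thesis ..
    next
      assume "E w b" then have "E b w" by (rule symE)
      then have "RR E ?L' b w" by (rule RR_E[OF _ edgesL'])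
      then show ?thesis ..
    qed
  next
    case False
    from RR_step[OF symE Rzw False] obtain g p q where
      g: "g \<in> set L" "edge_mon g = {#p, q#}" "E z p" "RR E (remove1 g L) q w" by blast
    have pa: "p \<noteq> a" using g(3) nza by blast
    have pb: "p \<noteq> b" using g(3) nzb by blast
    have gne: "g \<noteq> e"
    proof
      assume "g = e"
      then have "{#p, q#} = {#a, b#}" using g(2) em by simp
      from pair_eq[OF this] show False using pa pb by blast
    qed
    have gin: "g \<in> set ?L'" using gne g(1) by (simp add: in_set_remove1)
    have ein: "e \<in> set (remove1 g L)" using gne eL by (simp add: in_set_remove1)
    have comm: "remove1 e (remove1 g L) = remove1 g ?L'" by (rule remove1_commute)
    have Eg: "E (fst g) (snd g)" using edgesL g(1) by blast
    have MSL': "MS ?L' = {#p, q#} + MS (remove1 g ?L')" using MS_remove1[OF gin] g(2) by simp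
    have MSL: "MS L = {#a, b#} + MS ?L'" using MS_remove1[OF eL] em by simp
    from RR_split[OF symE edgesL' Rby gin g(2)]
    consider (A) "RR E (remove1 g ?L') b y"
      | (B) M1 M2 where "dec E M1" "dec E M2" "M1 + M2 = MS (remove1 g ?L')"
        "(dec E ({#b, p#} + M1) \<and> dec E ({#q, y#} + M2)) \<or>
         (dec E ({#b, q#} + M1) \<and> dec E ({#p, y#} + M2))"
      by blast
    then show ?thesis
    proof cases
      case A
      have len: "length (remove1 g L) < length L" using g(1)
        by (simp add: length_remove1) (metis One_nat_def diff_less length_pos_if_in_set zero_less_one)
      have h4: "RR E (remove1 e (remove1 g L)) b y" using A comm by simp
      have h5: "\<not> RR E (remove1 e (remove1 g L)) b q"
      proof
        assume "RR E (remove1 e (remove1 g L)) b q"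
        then have "RR E (remove1 g ?L') b q" using comm by simp
        then have "RR E (remove1 g ?L') q b" by (rule RR_sym[THEN iffD1])
        then have "RR E ?L' z b" by (rule RR_back[where E=E and z=z, OF gin g(2) g(3)])
        then have "RR E ?L' b z" by (rule RR_sym[THEN iffD1])
        then show False using nbz by blast
      qed
      have h6: "\<not> RR E (remove1 g L) q y"
      proof
        assume "RR E (remove1 g L) q y"
        then have "RR E L z y" by (rule RR_back[where E=E and z=z, OF g(1) g(2) g(3)])
        then show False using nzy by blast
      qed
      from less.hyps[OF len edges_remove1[OF edgesL, of g] ein em h4 h5 h6 g(4)]
      have "E w a \<or> RR E (remove1 e (remove1 g L)) b w" .
      then show ?thesis
      proof
        assume "E w a" then show ?thesis ..
      next
        assume "RR E (remove1 e (remove1 g L)) b w"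
        then have "RR E (remove1 g ?L') b w" using comm by simp
        then have "RR E ?L' b w" by (rule RR_up[where E=E, OF gin Eg])
        then show ?thesis ..
      qed
    next
      case B
      from B(4) show ?thesis
      proof
        assume h: "dec E ({#b, p#} + M1) \<and> dec E ({#q, y#} + M2)"
        have d1: "dec E {#z, p#}" by (rule dec_edge[of E z p, OF g(3)])
        have d2: "dec E {#a, b#}" by (rule dec_edge[of E a b, OF Eab])
        have "dec E ({#z, p#} + ({#q, y#} + M2) + M1 + {#a, b#})"
          using dec_add[OF dec_add[OF dec_add[OF d1 conjunct2[OF h]] B(1)] d2] .
        moreover have eq: "{#z, y#} + MS L = {#z, p#} + ({#q, y#} + M2) + M1 + {#a, b#}"
          using MSL MSL' B(3)[symmetric] by (simp add: ac_simps add_mset_commute)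
        ultimately have "RR E L z y" unfolding RR_def by (subst eq)
        then show ?thesis using nzy by blast
      next
        assume h: "dec E ({#b, q#} + M1) \<and> dec E ({#p, y#} + M2)"
        have d1: "dec E {#p, z#}" by (rule dec_edge[of E p z, OF symE[OF g(3)]])
        have "dec E (({#b, q#} + M1) + {#p, z#} + M2)"
          using dec_add[OF dec_add[OF conjunct1[OF h] d1] B(2)] .
        moreover have eq: "{#b, z#} + MS ?L' = ({#b, q#} + M1) + {#p, z#} + M2"
          using MSL' B(3)[symmetric] by (simp add: ac_simps add_mset_commute)
        ultimately have "RR E ?L' b z" unfolding RR_def by (subst eq)
        then show ?thesis using nbz by blast
      qed
    qed
  qed
qed

lemma size_MS: "size (MS L) = 2 * length L"
  unfolding MS_def by (induction L) (auto simp: edge_mon_def)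

lemma colon_RR: "in_colon E es {#x, y#} \<longleftrightarrow> RR E es x y"
proof
  assume "in_colon E es {#x, y#}"
  then obtain fs where fs: "length fs = length es + 1" "\<forall>f\<in>set fs. E (fst f) (snd f)"
    "sum_list (map edge_mon fs) \<subseteq># {#x, y#} + MS es"
    unfolding in_colon_def in_edge_power_def MS_def by blast
  have "size (sum_list (map edge_mon fs)) = size ({#x, y#} + MS es)"
    using size_MS[of fs] size_MS[of es] fs(1) unfolding MS_def by simp
  then have "sum_list (map edge_mon fs) = {#x, y#} + MS es"
    using fs(3) mset_subset_size subset_mset.le_imp_less_or_eq by fastforce
  then show "RR E es x y" unfolding RR_def dec_def using fs(2) by blast
next
  assume "RR E es x y"
  then obtain fs where fs: "\<forall>f\<in>set fs. E (fst f) (snd f)"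
    "sum_list (map edge_mon fs) = {#x, y#} + MS es"
    unfolding RR_def dec_def by blast
  have "2 * length fs = 2 * (length es + 1)"
    using arg_cong[OF fs(2), of size] size_MS[of fs] size_MS[of es] unfolding MS_def by simp
  then have "length fs = length es + 1" by simp
  then show "in_colon E es {#x, y#}"
    unfolding in_colon_def in_edge_power_def using fs MS_def by (metis subset_mset.order_refl)
qed

lemma switch:
  fixes g :: "nat \<Rightarrow> 'a"
  assumes AB: "\<And>u w. A u \<Longrightarrow> B w \<Longrightarrow> R u w" and Rsym: "\<And>u w. R u w \<Longrightarrow> R w u"
  shows "0 < m \<Longrightarrow> B (g 0) \<Longrightarrow> A (g m) \<Longrightarrow> (\<forall>t<m. \<not> R (g t) (g (Suc t))) \<Longrightarrow>
    \<exists>t. 0 < t \<and> t < m \<and> \<not> A (g t) \<and> \<not> B (g t) \<and> B (g (t - 1))"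
proof (induction m arbitrary: g)
  case 0
  then show ?case by simp
next
  case (Suc m)
  have n01: "\<not> R (g 0) (g 1)" using Suc.prems(4) by simp
  show ?case
  proof (cases "B (g 1)")
    case False
    have nA: "\<not> A (g 1)"
    proof
      assume "A (g 1)"
      then have "R (g 1) (g 0)" using AB Suc.prems(2) by blast
      then show False using n01 Rsym by blast
    qed
    have "m \<noteq> 0" using nA Suc.prems(3) by (metis One_nat_def)
    then show ?thesis using nA False Suc.prems(2) by (intro exI[of _ 1]) auto
  next
    case True
    show ?thesis
    proof (cases "m = 0")
      case True
      then have "A (g 1)" using Suc.prems(3) by simp
      then have "R (g 1) (g 0)" using AB Suc.prems(2) by blast
      then show ?thesis using n01 Rsym by blast
    next
      case False
      have "\<exists>t. 0 < t \<and> t < m \<and> \<not> A ((g \<circ> Suc) t) \<and> \<not> B ((g \<circ> Suc) t) \<and> B ((g \<circ> Suc) (t - 1))"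
        using Suc.IH[of "g \<circ> Suc"] False True Suc.prems(3,4) by auto
      then obtain t where t: "0 < t" "t < m" "\<not> A (g (Suc t))" "\<not> B (g (Suc t))" "B (g (Suc (t - 1)))"
        by auto
      have "Suc t - 1 = Suc (t - 1)" using t(1) by simp
      then show ?thesis using t by (intro exI[of _ "Suc t"]) auto
    qed
  qed
qed

lemma modinj:
  fixes j t t' n :: nat
  assumes "t < n" "t' < n" "(j + t) mod n = (j + t') mod n"
  shows "t = t'"
proof (rule ccontr)
  assume ne: "t \<noteq> t'"
  show False
  proof (cases "t < t'")
    case True
    then have "n dvd (j + t') - (j + t)" using assms(3) mod_eq_dvd_iff_nat[of "j + t" "j + t'" n] by simp
    then have "n dvd t' - t" by simp
    moreover have "0 < t' - t" "t' - t < n" using True assms by auto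
    ultimately show False using nat_dvd_not_less by blast
  next
    case False
    then have lt: "t' < t" using ne by simp
    then have "n dvd (j + t) - (j + t')" using assms(3) mod_eq_dvd_iff_nat[of "j + t'" "j + t" n] by simp
    then have "n dvd t - t'" by simp
    moreover have "0 < t - t'" "t - t' < n" using lt assms by auto
    ultimately show False using nat_dvd_not_less by blast
  qed
qed

lemma modsuc: "Suc ((j + t) mod n) mod n = (j + Suc t) mod (n::nat)"
  by (simp add: mod_Suc_eq)

theorem lemma6p15:
  fixes V :: "'a set" and E :: "'a \<Rightarrow> 'a \<Rightarrow> bool"
    and es :: "('a \<times> 'a) list" and ws :: "('a + 'a) list"
  assumes "simple_graph V E"
    and "gap_free E"
    and "length es \<ge> 1"
    and "\<forall>e\<in>set es. E (fst e) (snd e)"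
    and "length ws \<ge> 5"
    and "anticycle (pol_vertices V E es) (pol_edge E es) ws"
  shows "\<exists>vs. ws = map Inl vs \<and> anticycle V E vs"
proof -
  define n where "n = length ws"
  have n5: "n \<ge> 5" using assms(5) n_def by simp
  have symE: "\<And>u v. E u v \<Longrightarrow> E v u" using assms(1) unfolding simple_graph_def by blast
  have edges: "\<forall>f\<in>set es. E (fst f) (snd f)" using assms(4) by blast
  have dist: "distinct ws" and sub: "set ws \<subseteq> pol_vertices V E es"
    and AC: "\<And>i j. i < n \<Longrightarrow> j < n \<Longrightarrow> i \<noteq> j \<Longrightarrow>
       (pol_edge E es (ws ! i) (ws ! j) \<longleftrightarrow> \<not> (j = Suc i mod n \<or> i = Suc j mod n))"
    using assms(6) unfolding anticycle_def n_def by blast+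
  have allInl: "\<exists>v. ws ! k = Inl v" if k: "k < n" for k
  proof (cases "ws ! k")
    case (Inl v)
    then show ?thesis by blast
  next
    case (Inr c)
    define k2 where "k2 = (k + 2) mod n"
    define k3 where "k3 = (k + 3) mod n"
    have kk: "k = (k + 0) mod n" using k by simp
    have k1: "Suc k mod n = (k + 1) mod n" by simp
    have lt: "k2 < n" "k3 < n" using n5 unfolding k2_def k3_def by auto
    have "k \<noteq> k2" using modinj[of 0 n 2 k] n5 kk unfolding k2_def by auto
    moreover have "\<not> (k2 = Suc k mod n \<or> k = Suc k2 mod n)"
    proof
      assume "k2 = Suc k mod n \<or> k = Suc k2 mod n"
      then show False
      proof
        assume "k2 = Suc k mod n"
        then have "(k + 2) mod n = (k + 1) mod n" unfolding k2_def by simp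
        then show False using modinj[of 2 n 1 k] n5 by auto
      next
        assume "k = Suc k2 mod n"
        then have "(k + 0) mod n = (k + 3) mod n" using kk unfolding k2_def by (simp add: mod_Suc_eq eval_nat_numeral)
        then show False using modinj[of 0 n 3 k] n5 by auto
      qed
    qed
    ultimately have e2: "pol_edge E es (ws ! k) (ws ! k2)" using AC[OF k lt(1)] by blast
    have "k \<noteq> k3" using modinj[of 0 n 3 k] n5 kk unfolding k3_def by auto
    moreover have "\<not> (k3 = Suc k mod n \<or> k = Suc k3 mod n)"
    proof
      assume "k3 = Suc k mod n \<or> k = Suc k3 mod n"
      then show False
      proof
        assume "k3 = Suc k mod n"
        then have "(k + 3) mod n = (k + 1) mod n" unfolding k3_def by simp
        then show False using modinj[of 3 n 1 k] n5 by auto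
      next
        assume "k = Suc k3 mod n"
        then have "(k + 0) mod n = (k + 4) mod n" using kk unfolding k3_def by (simp add: mod_Suc_eq eval_nat_numeral)
        then show False using modinj[of 0 n 4 k] n5 by auto
      qed
    qed
    ultimately have e3: "pol_edge E es (ws ! k) (ws ! k3)" using AC[OF k lt(2)] by blast
    have w2: "ws ! k2 = Inl c" using e2 Inr by (cases "ws ! k2") auto
    have w3: "ws ! k3 = Inl c" using e3 Inr by (cases "ws ! k3") auto
    have "k2 \<noteq> k3" using modinj[of 2 n 3 k] n5 unfolding k2_def k3_def by auto
    then have "ws ! k2 \<noteq> ws ! k3" using dist lt nth_eq_iff_index_eq unfolding n_def by blast
    then show ?thesis using w2 w3 by simp
  qed
  define vs where "vs = map projl ws"
  have wsvs: "ws = map Inl vs"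
  proof (rule nth_equalityI)
    show "length ws = length (map Inl vs)" unfolding vs_def by simp
    fix k assume "k < length ws"
    then obtain v where "ws ! k = Inl v" using allInl n_def by blast
    then show "ws ! k = map Inl vs ! k" unfolding vs_def using \<open>k < length ws\<close> by simp
  qed
  have lenvs: "length vs = n" unfolding vs_def n_def by simp
  have wsk: "\<And>k. k < n \<Longrightarrow> ws ! k = Inl (vs ! k)" using wsvs lenvs by simp
  have distvs: "distinct vs" using dist wsvs by (simp add: distinct_map)
  have subV: "set vs \<subseteq> V"
  proof
    fix v assume "v \<in> set vs"
    then have "Inl v \<in> pol_vertices V E es" using sub wsvs by auto
    then show "v \<in> V" unfolding pol_vertices_def by auto
  qed
  have ACv: "\<And>i j. i < n \<Longrightarrow> j < n \<Longrightarrow> i \<noteq> j \<Longrightarrow>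
       (RR E es (vs ! i) (vs ! j) \<longleftrightarrow> \<not> (j = Suc i mod n \<or> i = Suc j mod n))"
  proof -
    fix i j assume ij: "i < n" "j < n" "i \<noteq> j"
    have "vs ! i \<noteq> vs ! j" using distvs ij lenvs nth_eq_iff_index_eq by blast
    then have "pol_edge E es (ws ! i) (ws ! j) = RR E es (vs ! i) (vs ! j)"
      using wsk[OF ij(1)] wsk[OF ij(2)] colon_RR by simp
    then show "RR E es (vs ! i) (vs ! j) \<longleftrightarrow> \<not> (j = Suc i mod n \<or> i = Suc j mod n)"
      using AC[OF ij] by simp
  qed
  have main: "E (vs ! i) (vs ! j)"
    if ij: "i < n" "j < n" "i \<noteq> j" and nc: "\<not> (j = Suc i mod n \<or> i = Suc j mod n)" for i j
  proof (rule ccontr)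
    assume nE: "\<not> E (vs ! i) (vs ! j)"
    have Rxy: "RR E es (vs ! i) (vs ! j)" using ACv[OF ij] nc by blast
    from RR_step[OF symE Rxy nE] obtain e a b where
      e: "e \<in> set es" "edge_mon e = {#a, b#}" "E (vs ! i) a" "RR E (remove1 e es) b (vs ! j)"
      by blast
    define A where "A = (\<lambda>u. E u a)"
    define B where "B = (\<lambda>w. RR E (remove1 e es) b w)"
    have AB: "\<And>u w. A u \<Longrightarrow> B w \<Longrightarrow> RR E es u w"
      unfolding A_def B_def using RR_back[where E=E, OF e(1) e(2)] by blast
    have Rsym: "\<And>u w. RR E es u w \<Longrightarrow> RR E es w u" by (simp add: RR_sym)
    define c where "c = (\<lambda>t. vs ! ((j + t) mod n))"
    have n0: "0 < n" using n5 by simp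
    obtain D where D: "0 < D" "D < n" "(j + D) mod n = i"
    proof (cases "j \<le> i")
      case True
      show ?thesis by (rule that[of "i - j"]) (use True ij in auto)
    next
      case False
      have "(j + (i + n - j)) mod n = i" using False ij by simp
      then show ?thesis by (intro that[of "i + n - j"]) (use False ij in auto)
    qed
    have c0: "c 0 = vs ! j" unfolding c_def using ij by simp
    have cn: "c n = vs ! j" unfolding c_def using ij by simp
    have cD: "c D = vs ! i" unfolding c_def using D by simp
    have D1: "D \<noteq> 1"
    proof
      assume "D = 1"
      then have "i = Suc j mod n" using D(3) by simp
      then show False using nc by blast
    qed
    have Dn1: "D \<noteq> n - 1"
    proof
      assume "D = n - 1"
      then have "(j + (n - 1)) mod n = i" using D(3) by simp
      then have "Suc i mod n = Suc ((j + (n - 1)) mod n) mod n" by simp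
      also have "\<dots> = (j + Suc (n - 1)) mod n" by (rule modsuc)
      also have "\<dots> = j" using n0 ij by simp
      finally show False using nc by simp
    qed
    have K1: "\<not> RR E es (c t) (c (Suc t))" if t: "t < n" for t
    proof -
      define I where "I = (j + t) mod n"
      have I: "I < n" unfolding I_def using n0 by simp
      have I': "(j + Suc t) mod n = Suc I mod n" unfolding I_def by (simp add: modsuc)
      have Ine: "I \<noteq> Suc I mod n"
      proof (cases "Suc I < n")
        case True
        then show ?thesis by simp
      next
        case False
        then have "Suc I = n" using I by simp
        then show ?thesis using n5 by simp
      qed
      have "Suc I mod n < n" using n0 by simp
      then have "\<not> RR E es (vs ! I) (vs ! (Suc I mod n))" using ACv[OF I _ Ine] by blast
      then show ?thesis unfolding c_def I_def[symmetric] using I' by simp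
    qed
    have K2: "RR E es (c t1) (c t2)" if t: "0 < t1" "t1 < t2" "t2 < n" "Suc t1 \<noteq> t2" for t1 t2
    proof -
      define I1 where "I1 = (j + t1) mod n"
      define I2 where "I2 = (j + t2) mod n"
      have I: "I1 < n" "I2 < n" unfolding I1_def I2_def using n0 by auto
      have ne: "I1 \<noteq> I2" using modinj[of t1 n t2 j] t unfolding I1_def I2_def by auto
      have nc2: "\<not> (I2 = Suc I1 mod n \<or> I1 = Suc I2 mod n)"
      proof
        assume "I2 = Suc I1 mod n \<or> I1 = Suc I2 mod n"
        then show False
        proof
          assume "I2 = Suc I1 mod n"
          then have "(j + t2) mod n = (j + Suc t1) mod n" unfolding I1_def I2_def by (simp add: modsuc)
          then show False using modinj[of t2 n "Suc t1" j] t by auto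
        next
          assume "I1 = Suc I2 mod n"
          then have h: "(j + t1) mod n = (j + Suc t2) mod n" unfolding I1_def I2_def by (simp add: modsuc)
          show False
          proof (cases "Suc t2 < n")
            case True
            then show False using modinj[of t1 n "Suc t2" j] t h by auto
          next
            case False
            then have "Suc t2 = n" using t by simp
            then have "(j + t1) mod n = (j + 0) mod n" using h by simp
            then show False using modinj[of t1 n 0 j] t by auto
          qed
        qed
      qed
      have "RR E es (vs ! I1) (vs ! I2)" using ACv[OF I ne] nc2 by blast
      then show ?thesis unfolding c_def I1_def I2_def .
    qed
    have Bj: "B (c 0)" using e(4) c0 unfolding B_def by simp
    have AD: "A (c D)" using e(3) cD unfolding A_def by simp
    have cons1: "\<forall>t<D. \<not> RR E es (c t) (c (Suc t))" using K1 D by auto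
    from switch[of A B "RR E es", OF AB Rsym D(1) Bj AD cons1]
    obtain t1 where t1: "0 < t1" "t1 < D" "\<not> A (c t1)" "\<not> B (c t1)" "B (c (t1 - 1))" by blast
    define h where "h = (\<lambda>t. c (n - t))"
    have h0: "B (h 0)" using Bj c0 cn unfolding h_def by simp
    have hm: "A (h (n - D))" using AD D unfolding h_def by simp
    have cons2: "\<forall>t<n - D. \<not> RR E es (h t) (h (Suc t))"
    proof (intro allI impI)
      fix t assume tl: "t < n - D"
      define s where "s = n - Suc t"
      have s: "s < n" "Suc s = n - t" unfolding s_def using tl by auto
      have "\<not> RR E es (c s) (c (Suc s))" by (rule K1[OF s(1)])
      then have "\<not> RR E es (c (n - Suc t)) (c (n - t))" using s unfolding s_def by simp
      then show "\<not> RR E es (h t) (h (Suc t))" unfolding h_def using Rsym by blast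
    qed
    have nD: "0 < n - D" using D by simp
    from switch[of A B "RR E es", OF AB Rsym nD h0 hm cons2]
    obtain s2 where s2: "0 < s2" "s2 < n - D" "\<not> A (h s2)" "\<not> B (h s2)" by blast
    define t2 where "t2 = n - s2"
    have t2: "D < t2" "t2 < n" using s2 unfolding t2_def by auto
    have hs2: "h s2 = c t2" unfolding h_def t2_def by simp
    have nA2: "\<not> E (c t2) a" using s2(3) hs2 unfolding A_def by simp
    have nB2: "\<not> RR E (remove1 e es) b (c t2)" using s2(4) hs2 unfolding B_def by simp
    have R12: "RR E es (c t1) (c t2)" by (rule K2) (use t1 t2 in auto)
    have nR: "\<not> RR E es (c t1) (c (t1 - 1))"
    proof -
      have eq: "Suc (t1 - 1) = t1" using t1(1) by simp
      have "\<not> RR E es (c (t1 - 1)) (c (Suc (t1 - 1)))" using K1[of "t1 - 1"] t1 D by auto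
      then have "\<not> RR E es (c (t1 - 1)) (c t1)" using eq by simp
      then show ?thesis using Rsym by blast
    qed
    have hb1: "RR E (remove1 e es) b (c (t1 - 1))" using t1(5) unfolding B_def by simp
    have hb2: "\<not> RR E (remove1 e es) b (c t1)" using t1(4) unfolding B_def by simp
    have "E (c t2) a \<or> RR E (remove1 e es) b (c t2)"
      by (rule keyZ[where E=E and L=es and e=e and a=a and b=b and y="c (t1 - 1)" and z="c t1"
          and w="c t2", OF symE assms(2) edges e(1) e(2) hb1 hb2 nR R12])
    then show False
    proof
      assume "E (c t2) a"
      with nA2 show False by contradiction
    next
      assume "RR E (remove1 e es) b (c t2)"
      with nB2 show False by contradiction
    qed
  qed
  have "anticycle V E vs"
    unfolding anticycle_def
  proof (intro conjI)
    show "distinct vs" by (rule distvs)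
    show "set vs \<subseteq> V" by (rule subV)
    show "\<forall>i<length vs. \<forall>j<length vs. i \<noteq> j \<longrightarrow>
        (E (vs ! i) (vs ! j) \<longleftrightarrow> \<not> (j = Suc i mod length vs \<or> i = Suc j mod length vs))"
    proof (intro allI impI)
      fix i j assume i: "i < length vs" and j: "j < length vs" and ij: "i \<noteq> j"
      have ij': "i < n" "j < n" using i j lenvs by auto
      have A1: "RR E es (vs ! i) (vs ! j) \<longleftrightarrow> \<not> (j = Suc i mod n \<or> i = Suc j mod n)"
        by (rule ACv[OF ij' ij])
      have A2: "\<not> (j = Suc i mod n \<or> i = Suc j mod n) \<Longrightarrow> E (vs ! i) (vs ! j)"
        by (rule main[OF ij' ij])
      have A3: "E (vs ! i) (vs ! j) \<Longrightarrow> RR E es (vs ! i) (vs ! j)"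
        by (rule RR_E[OF _ edges])
      have "E (vs ! i) (vs ! j) \<longleftrightarrow> \<not> (j = Suc i mod n \<or> i = Suc j mod n)"
        using A1 A2 A3 by blast
      then show "E (vs ! i) (vs ! j) \<longleftrightarrow> \<not> (j = Suc i mod length vs \<or> i = Suc j mod length vs)"
        unfolding lenvs .
    qed
  qed
  then show ?thesis using wsvs by blast
qed

end
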